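(* Assume (H1), (H2) and the sequence setting (Seq), and let $x\in\mathrm{dom}\,J$ with $\partial J(x)\neq\emptyset$. Then the sequence $\big(\nabla_x S_H(x_k,t_{1,k},\dots,t_{N,k})\big)_k$ is bounded, and each of its cluster points belongs to $\partial J(x)$.
   Context: Hypothesis (H1): each $H_j:\mathbb{R}^n\to\mathbb{R}$ ($j=1,\dots,N$) is finite-valued, convex and 1-coercive (i.e. $H_j(p)/\|p\|\to+\infty$ as $\|p\|\to\infty$), and at least one $H_j$ is strictly convex. Hypothesis (H2): $J:\mathbb{R}^n\to\mathbb{R}\cup\{+\infty\}$ is proper, convex and lower semicontinuous. $J^*$ is the Legendre transform of $J$. Hopf formula: $S_H(y,t_1,\dots,t_N)=\sup_{p\in\mathbb{R}^n}\big(\langle p,y\rangle-J^*(p)-\sum_{j}t_jH_j(p)\big)$ for $t_1,\dots,t_N\ge0$; under (H1)-(H2) and $t_j>0$ for all $j$, $S_H(\cdot,t_1,\dots,t_N)$ is finite and differentiable in $y$, and $\nabla_y S_H$ is the unique maximizer in the Hopf formula. Sequence setting (Seq): $x\in\mathbb{R}^n$; for each $j\in\{1,\dots,N\}$ and $k\in\mathbb{N}$, $t_{j,k}>0$ and $v_{j,k}\in\mathbb{R}^n$, with $t_{j,k}\to0$, $v_{j,k}\to v_{j,\infty}$ and $t_{j,k}/t_{1,k}\to\alpha_{j,\infty}\in\mathbb{R}$ as $k\to\infty$; and $x_k=x+\sum_{j=1}^N t_{j,k}v_{j,k}$. *)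

theory Defs
  imports "HOL-Analysis.Analysis"
begin

definition epi :: "('a::real_normed_vector \<Rightarrow> ereal) \<Rightarrow> ('a \<times> real) set" where
  "epi J = {(x, r). J x \<le> ereal r}"

definition proper_fun :: "('a \<Rightarrow> ereal) \<Rightarrow> bool" where
  "proper_fun J \<longleftrightarrow> (\<forall>x. J x \<noteq> -\<infinity>) \<and> (\<exists>x. J x \<noteq> \<infinity>)"

definition convex_fun :: "('a::real_normed_vector \<Rightarrow> ereal) \<Rightarrow> bool" where
  "convex_fun J \<longleftrightarrow> convex (epi J)"

definition lsc_fun :: "('a::real_normed_vector \<Rightarrow> ereal) \<Rightarrow> bool" where
  "lsc_fun J \<longleftrightarrow> closed (epi J)"

definition strictly_convex :: "('a::real_vector \<Rightarrow> real) \<Rightarrow> bool" where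
  "strictly_convex f \<longleftrightarrow>
     (\<forall>x y u. x \<noteq> y \<and> 0 < u \<and> u < 1 \<longrightarrow>
        f ((1 - u) *\<^sub>R x + u *\<^sub>R y) < (1 - u) * f x + u * f y)"

definition one_coercive :: "('a::real_normed_vector \<Rightarrow> real) \<Rightarrow> bool" where
  "one_coercive f \<longleftrightarrow> filterlim (\<lambda>p. f p / norm p) at_top at_infinity"

definition legendre :: "('a::real_inner \<Rightarrow> ereal) \<Rightarrow> 'a \<Rightarrow> ereal" where
  "legendre J p = (SUP x. ereal (p \<bullet> x) - J x)"

definition hopf :: "nat \<Rightarrow> (nat \<Rightarrow> 'a::real_inner \<Rightarrow> real) \<Rightarrow> ('a \<Rightarrow> ereal)
                    \<Rightarrow> 'a \<Rightarrow> (nat \<Rightarrow> real) \<Rightarrow> ereal" where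
  "hopf N H J y t = (SUP p. ereal (p \<bullet> y) - legendre J p - ereal (\<Sum>j=1..N. t j * H j p))"

definition hopf_grad :: "nat \<Rightarrow> (nat \<Rightarrow> 'a::real_inner \<Rightarrow> real) \<Rightarrow> ('a \<Rightarrow> ereal)
                    \<Rightarrow> 'a \<Rightarrow> (nat \<Rightarrow> real) \<Rightarrow> 'a" where
  "hopf_grad N H J y t = (THE g. GDERIV (\<lambda>z. real_of_ereal (hopf N H J z t)) y :> g)"

definition subdiff :: "('a::real_inner \<Rightarrow> ereal) \<Rightarrow> 'a \<Rightarrow> 'a set" where
  "subdiff J x = {p. \<forall>y. J y \<ge> J x + ereal (p \<bullet> (y - x))}"

definition cluster_point :: "(nat \<Rightarrow> 'a::topological_space) \<Rightarrow> 'a \<Rightarrow> bool" where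
  "cluster_point s q \<longleftrightarrow> (\<exists>r. strict_mono r \<and> (s \<circ> r) \<longlonglongrightarrow> q)"

end

theory Submission
  imports Defs
begin


lemma ereal_minus_le_iff: "F \<noteq> -\<infinity> \<Longrightarrow> (ereal a - F \<le> ereal c) \<longleftrightarrow> (ereal (a - c) \<le> F)"
  by (cases F) auto

lemma ereal_le_minus_iff: "F \<noteq> -\<infinity> \<Longrightarrow> (ereal c \<le> ereal a - F) \<longleftrightarrow> (F \<le> ereal (a - c))"
  by (cases F) auto

lemma ereal_less_minus_iff: "F \<noteq> -\<infinity> \<Longrightarrow> (ereal c < ereal a - F) \<longleftrightarrow> (F < ereal (a - c))"
  by (cases F) auto

locale hopf_gen =
  fixes f :: "'a::euclidean_space \<Rightarrow> ereal"
  assumes f_ninf: "\<And>p. f p \<noteq> -\<infinity>"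
    and f_fin: "\<exists>p0. f p0 \<noteq> \<infinity>"
    and f_lsc: "\<And>p q c d. p \<longlonglongrightarrow> q \<Longrightarrow> (\<And>n. f (p n) \<le> ereal (c n)) \<Longrightarrow> c \<longlonglongrightarrow> d \<Longrightarrow> f q \<le> ereal d"
    and f_strict: "\<And>p q a b. p \<noteq> q \<Longrightarrow> f p = ereal a \<Longrightarrow> f q = ereal b \<Longrightarrow>
                     f ((1/2) *\<^sub>R (p + q)) < ereal ((a+b)/2)"
    and f_coerc: "\<And>c. \<exists>K. \<forall>p. ereal (c * norm p - K) \<le> f p"
begin

definition S where "S y = (SUP p. ereal (p \<bullet> y) - f p)"
definition s where "s y = real_of_ereal (S y)"
definition P where "P y = (SOME p. f p \<le> ereal (p \<bullet> y - s y))"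

lemma upper_bound: obtains K where "\<And>p. ereal (p \<bullet> y) - f p \<le> ereal (K - norm p)"
proof -
  obtain K where K: "\<And>p. ereal ((norm y + 1) * norm p - K) \<le> f p" using f_coerc by blast
  have "ereal (p \<bullet> y) - f p \<le> ereal (K - norm p)" for p
  proof -
    have "p \<bullet> y \<le> norm p * norm y" by (metis Cauchy_Schwarz_ineq2 abs_le_D1 mult.commute)
    then have "ereal (p \<bullet> y - (K - norm p)) \<le> ereal ((norm y + 1) * norm p - K)"
      by (simp add: algebra_simps)
    also have "\<dots> \<le> f p" by (rule K)
    finally show ?thesis using ereal_minus_le_iff[OF f_ninf] by blast
  qed
  then show ?thesis using that by blast
qed

lemma le_S: "ereal (p \<bullet> y) - f p \<le> S y"
  unfolding S_def by (rule SUP_upper) auto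

lemma S_real: "S y = ereal (s y)"
proof -
  obtain K where K: "\<And>p. ereal (p \<bullet> y) - f p \<le> ereal (K - norm p)" using upper_bound by blast
  have "S y \<le> ereal K"
    unfolding S_def
  proof (rule SUP_least)
    fix p show "ereal (p \<bullet> y) - f p \<le> ereal K"
      using K[of p] by (metis ereal_less_eq(3) diff_le_eq norm_ge_zero order.trans le_add_same_cancel1)
  qed
  moreover obtain p0 where "f p0 \<noteq> \<infinity>" using f_fin by blast
  then obtain r0 where r0: "f p0 = ereal r0" using f_ninf by (cases "f p0") auto
  have "ereal (p0 \<bullet> y - r0) \<le> S y" using le_S[of p0 y] r0 by simp
  ultimately show ?thesis unfolding s_def by (cases "S y") auto
qed

lemma f_ge: "ereal (p \<bullet> y - s y) \<le> f p"
  using le_S[of p y] S_real[of y] ereal_minus_le_iff[OF f_ninf] by simp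

lemma ex_max: "\<exists>p. f p \<le> ereal (p \<bullet> y - s y)"
proof -
  have "\<exists>p. f p \<le> ereal (p \<bullet> y - s y + inverse (real (Suc n)))" for n
  proof -
    have "ereal (s y - inverse (real (Suc n))) < S y" using S_real[of y] by simp
    then obtain p where "ereal (s y - inverse (real (Suc n))) < ereal (p \<bullet> y) - f p"
      unfolding S_def less_SUP_iff by blast
    then have "f p < ereal (p \<bullet> y - (s y - inverse (real (Suc n))))"
      using ereal_less_minus_iff[OF f_ninf] by blast
    then show ?thesis by (intro exI[of _ p]) (simp add: algebra_simps)
  qed
  then obtain pn where pn: "\<And>n. f (pn n) \<le> ereal (pn n \<bullet> y - s y + inverse (real (Suc n)))"
    by metis
  obtain K where K: "\<And>p. ereal (p \<bullet> y) - f p \<le> ereal (K - norm p)" using upper_bound by blast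
  have nb: "norm (pn n) \<le> K - s y + 1" for n
  proof -
    have "ereal (s y - inverse (real (Suc n))) \<le> ereal (pn n \<bullet> y) - f (pn n)"
      using pn[of n] ereal_le_minus_iff[OF f_ninf] by (simp add: algebra_simps)
    also have "\<dots> \<le> ereal (K - norm (pn n))" by (rule K)
    finally have "s y - inverse (real (Suc n)) \<le> K - norm (pn n)" by simp
    moreover have "inverse (real (Suc n)) \<le> 1" by (simp add: inverse_le_1_iff)
    ultimately show ?thesis by linarith
  qed
  have "bounded (range pn)" unfolding bounded_iff using nb by blast
  then obtain l r where r: "strict_mono r" and l: "(pn \<circ> r) \<longlonglongrightarrow> l"
    using bounded_imp_convergent_subsequence by blast
  have inv0: "(\<lambda>n. inverse (real (Suc (r n)))) \<longlonglongrightarrow> 0"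
    using LIMSEQ_subseq_LIMSEQ[OF LIMSEQ_inverse_real_of_nat r] by (simp add: o_def)
  have "f l \<le> ereal (l \<bullet> y - s y + 0)"
  proof (rule f_lsc[OF l])
    show "f ((pn \<circ> r) n) \<le> ereal ((pn \<circ> r) n \<bullet> y - s y + inverse (real (Suc (r n))))" for n
      using pn[of "r n"] by simp
    show "(\<lambda>n. (pn \<circ> r) n \<bullet> y - s y + inverse (real (Suc (r n)))) \<longlonglongrightarrow> l \<bullet> y - s y + 0"
      by (intro tendsto_intros l inv0)
  qed
  then show ?thesis by auto
qed

lemma P_max: "f (P y) \<le> ereal (P y \<bullet> y - s y)"
  unfolding P_def by (rule someI_ex[OF ex_max])

lemma P_eq: "f (P y) = ereal (P y \<bullet> y - s y)"
  using P_max f_ge by (rule antisym)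

lemma max_unique:
  assumes p: "f p \<le> ereal (p \<bullet> y - s y)" and q: "f q \<le> ereal (q \<bullet> y - s y)"
  shows "p = q"
proof (rule ccontr)
  assume ne: "p \<noteq> q"
  have fp: "f p = ereal (p \<bullet> y - s y)" using p f_ge by (rule antisym)
  have fq: "f q = ereal (q \<bullet> y - s y)" using q f_ge by (rule antisym)
  define m where "m = (1/2) *\<^sub>R (p + q)"
  have "f m < ereal (((p \<bullet> y - s y) + (q \<bullet> y - s y))/2)"
    unfolding m_def by (rule f_strict[OF ne fp fq])
  also have "((p \<bullet> y - s y) + (q \<bullet> y - s y))/2 = m \<bullet> y - s y"
    unfolding m_def by (simp add: inner_add_left field_simps)
  finally show False using f_ge[of m y] by simp
qed

lemma P_unique: "f p \<le> ereal (p \<bullet> y - s y) \<Longrightarrow> p = P y"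
  using max_unique P_max by blast

end



context hopf_gen
begin

lemma P_bound: "\<exists>R. \<forall>y. norm y \<le> M \<longrightarrow> norm (P y) \<le> R"
proof -
  obtain K where K: "\<And>p. ereal ((M + 1) * norm p - K) \<le> f p" using f_coerc by blast
  obtain p0 where "f p0 \<noteq> \<infinity>" using f_fin by blast
  then obtain r0 where r0: "f p0 = ereal r0" using f_ninf by (cases "f p0") auto
  have "norm (P y) \<le> norm p0 * M + r0 + K" if y: "norm y \<le> M" for y
  proof -
    have a: "(M + 1) * norm (P y) - K \<le> P y \<bullet> y - s y" using K[of "P y"] P_eq[of y] by simp
    have b: "p0 \<bullet> y - s y \<le> r0" using f_ge[of p0 y] r0 by simp
    have c1: "P y \<bullet> y \<le> norm (P y) * norm y"
      by (rule order_trans[OF abs_ge_self Cauchy_Schwarz_ineq2])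
    have c2: "norm (P y) * norm y \<le> norm (P y) * M" by (rule mult_left_mono[OF y norm_ge_zero])
    have d1: "- (p0 \<bullet> y) \<le> norm p0 * norm y"
      by (rule order_trans[OF abs_ge_minus_self Cauchy_Schwarz_ineq2])
    have d2: "norm p0 * norm y \<le> norm p0 * M" by (rule mult_left_mono[OF y norm_ge_zero])
    have e: "(M + 1) * norm (P y) = norm (P y) * M + norm (P y)" by (simp add: algebra_simps)
    show ?thesis using a b c1 c2 d1 d2 e by linarith
  qed
  then show ?thesis by blast
qed

lemma P_cont:
  assumes yn: "yn \<longlonglongrightarrow> y"
  shows "(\<lambda>n. P (yn n)) \<longlonglongrightarrow> P y"
proof (rule ccontr)
  assume nc: "\<not> ?thesis"
  then obtain e where e: "e > 0" and fr: "\<forall>N. \<exists>n\<ge>N. \<not> dist (P (yn n)) (P y) < e"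
    unfolding lim_sequentially by blast
  have "infinite {n. e \<le> dist (P (yn n)) (P y)}"
    unfolding infinite_nat_iff_unbounded_le using fr by (auto simp: not_less)
  then obtain r :: "nat \<Rightarrow> nat" where r: "strict_mono r" and rA: "\<And>n::nat. e \<le> dist (P (yn (r n))) (P y)"
    using infinite_enumerate by blast
  obtain M where M: "\<And>n. norm (yn n) \<le> M"
    using convergent_imp_Bseq[of yn] yn unfolding Bseq_def convergent_def by blast
  obtain R where R: "\<And>y. norm y \<le> M \<Longrightarrow> norm (P y) \<le> R" using P_bound by blast
  have "bounded (range (\<lambda>n. P (yn (r n))))" unfolding bounded_iff using R M by blast
  then obtain q r2 where r2: "strict_mono r2" and q: "((\<lambda>n. P (yn (r n))) \<circ> r2) \<longlonglongrightarrow> q"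
    using bounded_imp_convergent_subsequence by blast
  define z where "z = (\<lambda>n. yn (r (r2 n)))"
  have z: "z \<longlonglongrightarrow> y" unfolding z_def
    using LIMSEQ_subseq_LIMSEQ[OF LIMSEQ_subseq_LIMSEQ[OF yn r] r2] by (simp add: o_def)
  have q': "(\<lambda>n. P (z n)) \<longlonglongrightarrow> q" using q by (simp add: z_def o_def)
  have "f q \<le> ereal (q \<bullet> y - P y \<bullet> y + (P y \<bullet> y - s y))"
  proof (rule f_lsc[OF q'])
    fix n
    have a: "f (P (z n)) = ereal (P (z n) \<bullet> z n - s (z n))" by (rule P_eq)
    have b: "P y \<bullet> z n - s (z n) \<le> P y \<bullet> y - s y" using f_ge[of "P y" "z n"] P_eq[of y] by simp
    show "f (P (z n)) \<le> ereal (P (z n) \<bullet> z n - P y \<bullet> z n + (P y \<bullet> y - s y))"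
      using a b by simp
    show "(\<lambda>n. P (z n) \<bullet> z n - P y \<bullet> z n + (P y \<bullet> y - s y)) \<longlonglongrightarrow> q \<bullet> y - P y \<bullet> y + (P y \<bullet> y - s y)"
      by (intro tendsto_intros q' z)
  qed
  then have "q = P y" by (intro P_unique) simp
  moreover have "(\<lambda>n. dist (P (z n)) (P y)) \<longlonglongrightarrow> dist q (P y)"
    by (intro tendsto_dist q' tendsto_const)
  ultimately have "(\<lambda>n. dist (P (z n)) (P y)) \<longlonglongrightarrow> 0" by simp
  then have "eventually (\<lambda>n. dist (P (z n)) (P y) < e) sequentially"
    using e by (rule order_tendstoD(2))
  then obtain n where "dist (P (z n)) (P y) < e" unfolding eventually_sequentially by blast
  moreover have "e \<le> dist (P (z n)) (P y)" unfolding z_def by (rule rA)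
  ultimately show False by simp
qed

lemma P_isCont: "isCont P y"
  using P_cont unfolding continuous_at_sequentially by (simp add: o_def)

lemma s_deriv: "GDERIV s y :> P y"
  unfolding gderiv_def has_derivative_iff_norm
proof (intro conjI)
  show "bounded_linear (\<lambda>h. h \<bullet> P y)" by (rule bounded_linear_inner_left)
  have key: "norm (norm (s z - s y - (z - y) \<bullet> P y) / norm (z - y)) \<le> norm (P z - P y)" for z
  proof (cases "z = y")
    case True then show ?thesis by simp
  next
    case False
    then have nz: "norm (z - y) > 0" by simp
    have a: "P y \<bullet> z - s z \<le> P y \<bullet> y - s y" using f_ge[of "P y" z] P_eq[of y] by simp
    have b: "P z \<bullet> y - s y \<le> P z \<bullet> z - s z" using f_ge[of "P z" y] P_eq[of z] by simp
    have c: "(P z - P y) \<bullet> (z - y) \<le> norm (P z - P y) * norm (z - y)"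
      by (rule order_trans[OF abs_ge_self Cauchy_Schwarz_ineq2])
    have "0 \<le> s z - s y - (z - y) \<bullet> P y" using a by (simp add: inner_diff_left inner_commute)
    moreover have "s z - s y - (z - y) \<bullet> P y \<le> (P z - P y) \<bullet> (z - y)"
      using b by (simp add: inner_diff_left inner_diff_right inner_commute)
    ultimately have "\<bar>s z - s y - (z - y) \<bullet> P y\<bar> \<le> norm (P z - P y) * norm (z - y)"
      using c by simp
    then show ?thesis using nz by (simp add: divide_le_eq)
  qed
  have "((\<lambda>z. norm (P z - P y)) \<longlongrightarrow> 0) (at y)"
    using P_isCont[of y] unfolding isCont_def by (intro tendsto_norm_zero LIM_zero)
  then show "((\<lambda>z. norm (s z - s y - (z - y) \<bullet> P y) / norm (z - y)) \<longlongrightarrow> 0) (at y)"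
    by (rule Lim_null_comparison[OF always_eventually, rotated]) (use key in blast)
qed

end



lemma L_ge: "ereal (p \<bullet> y) - J y \<le> legendre J p"
  unfolding legendre_def by (rule SUP_upper) auto

lemma L_lsc:
  assumes Jn: "\<And>z. J z \<noteq> -\<infinity>" and pn: "pn \<longlonglongrightarrow> q"
    and le: "\<And>n. legendre J (pn n) \<le> ereal (c n)" and c: "c \<longlonglongrightarrow> d"
  shows "legendre J q \<le> ereal d"
  unfolding legendre_def
proof (rule SUP_least)
  fix z
  show "ereal (q \<bullet> z) - J z \<le> ereal d"
  proof (cases "J z")
    case (real jz)
    have "pn n \<bullet> z - jz \<le> c n" for n
      using order_trans[OF L_ge[of "pn n" z J] le[of n]] real by simp
    then have "q \<bullet> z - jz \<le> d"
      by (intro LIMSEQ_le[of "\<lambda>n. pn n \<bullet> z - jz" "q \<bullet> z - jz" c d] c) (auto intro!: tendsto_intros pn)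
    then show ?thesis using real by simp
  next
    case MInf then show ?thesis using Jn[of z] by simp
  qed simp
qed

lemma L_mid:
  assumes Jn: "\<And>z. J z \<noteq> -\<infinity>" and a: "legendre J p = ereal a" and b: "legendre J q = ereal b"
  shows "legendre J ((1/2) *\<^sub>R (p + q)) \<le> ereal ((a + b)/2)"
  unfolding legendre_def
proof (rule SUP_least)
  fix z
  show "ereal (((1/2) *\<^sub>R (p + q)) \<bullet> z) - J z \<le> ereal ((a + b)/2)"
  proof (cases "J z")
    case (real jz)
    have "p \<bullet> z - jz \<le> a" using L_ge[of p z J] a real by simp
    moreover have "q \<bullet> z - jz \<le> b" using L_ge[of q z J] b real by simp
    ultimately show ?thesis using real by (simp add: inner_add_left field_simps)
  next
    case MInf then show ?thesis using Jn[of z] by simp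
  qed simp
qed

definition Tsum :: "nat \<Rightarrow> (nat \<Rightarrow> 'a \<Rightarrow> real) \<Rightarrow> (nat \<Rightarrow> real) \<Rightarrow> 'a \<Rightarrow> real" where
  "Tsum N H tt p = (\<Sum>j=1..N. tt j * H j p)"

lemma H_cont: "convex_on UNIV (h :: 'a::euclidean_space \<Rightarrow> real) \<Longrightarrow> isCont h p"
  using convex_on_continuous[OF open_UNIV] continuous_on_eq_continuous_at[OF open_UNIV] by blast

lemma H_lower:
  fixes h :: "'a::euclidean_space \<Rightarrow> real"
  assumes cv: "convex_on UNIV h" and co: "one_coercive h"
  shows "\<exists>K. \<forall>p. c * norm p - K \<le> h p"
proof -
  have "eventually (\<lambda>p. c \<le> h p / norm p) at_infinity"
    using co unfolding one_coercive_def filterlim_at_top by blast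
  then obtain b where b: "\<And>p. b \<le> norm p \<Longrightarrow> c \<le> h p / norm p"
    unfolding eventually_at_infinity by blast
  define R where "R = max b 1"
  have "continuous_on (cball 0 R) h"
    using convex_on_continuous[OF open_UNIV cv] continuous_on_subset by blast
  then have "compact (h ` cball 0 R)" by (intro compact_continuous_image) auto
  then have "bounded (h ` cball 0 R)" by (rule compact_imp_bounded)
  then obtain B where B0: "\<forall>z\<in>h ` cball 0 R. norm z \<le> B" unfolding bounded_iff by blast
  have B: "norm (h p) \<le> B" if "p \<in> cball 0 R" for p using B0 that by blast
  have "c * norm p - (B + \<bar>c\<bar> * R) \<le> h p" for p
  proof (cases "norm p \<le> R")
    case True
    have "c * norm p \<le> \<bar>c\<bar> * norm p" by (simp add: mult_right_mono)
    also have "\<dots> \<le> \<bar>c\<bar> * R" using True by (simp add: mult_left_mono)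
    finally show ?thesis using B[of p] True by (simp add: abs_le_iff)
  next
    case False
    then have "b \<le> norm p" "norm p > 0" unfolding R_def by auto
    then have "c * norm p \<le> h p" using b[of p] by (simp add: le_divide_eq)
    moreover have "0 \<in> cball (0::'a) R" unfolding R_def by simp
    then have "0 \<le> B" using norm_ge_zero[of "h 0"] B[of 0] by linarith
    moreover have "0 \<le> \<bar>c\<bar> * R" unfolding R_def by simp
    ultimately show ?thesis by linarith
  qed
  then show ?thesis by blast
qed

lemma gderiv_unique:
  assumes "GDERIV f y :> g1" "GDERIV f y :> g2" shows "g1 = g2"
proof -
  have "(\<lambda>h. h \<bullet> g1) = (\<lambda>h. h \<bullet> g2)"
    using has_derivative_unique assms unfolding gderiv_def by blast
  then have "(g1 - g2) \<bullet> g1 = (g1 - g2) \<bullet> g2" by metis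
  then have "(g1 - g2) \<bullet> (g1 - g2) = 0" by (simp add: inner_diff_right)
  then show ?thesis by simp
qed

context
  fixes N :: nat and H :: "nat \<Rightarrow> 'a::euclidean_space \<Rightarrow> real" and tt :: "nat \<Rightarrow> real"
  assumes Hcv: "\<And>j. j \<in> {1..N} \<Longrightarrow> convex_on UNIV (H j)"
    and Hco: "\<And>j. j \<in> {1..N} \<Longrightarrow> one_coercive (H j)"
    and Hst: "\<exists>j\<in>{1..N}. strictly_convex (H j)"
    and ttp: "\<And>j. j \<in> {1..N} \<Longrightarrow> tt j > 0"
begin

lemma ttp': "j \<in> {1..N} \<Longrightarrow> 0 \<le> tt j"
  using ttp[of j] by simp

lemma T_cont: "pn \<longlonglongrightarrow> q \<Longrightarrow> (\<lambda>n. Tsum N H tt (pn n)) \<longlonglongrightarrow> Tsum N H tt q"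
  unfolding Tsum_def
  by (intro tendsto_sum tendsto_mult_left isCont_tendsto_compose[OF H_cont[OF Hcv]]) auto

lemma T_coerc: "\<exists>K. \<forall>p. c * norm p - K \<le> Tsum N H tt p"
proof -
  have N1: "1 \<in> {1..N}" using Hst by auto
  define c' where "c' = \<bar>c\<bar> / tt 1"
  have "\<forall>j\<in>{1..N}. \<exists>K. \<forall>p. c' * norm p - K \<le> H j p" using H_lower[OF Hcv Hco] by blast
  then obtain Kf where Kf: "\<And>j p. j \<in> {1..N} \<Longrightarrow> c' * norm p - Kf j \<le> H j p" by metis
  have "c * norm p - (\<Sum>j=1..N. tt j * Kf j) \<le> Tsum N H tt p" for p
  proof -
    have "c * norm p \<le> tt 1 * (c' * norm p)"
      using ttp[OF N1] by (simp add: c'_def mult_right_mono)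
    also have "\<dots> \<le> (\<Sum>j=1..N. tt j * (c' * norm p))"
      by (rule member_le_sum[OF N1]) (use ttp[OF N1] ttp' in \<open>auto simp: c'_def intro!: divide_nonneg_pos mult_nonneg_nonneg\<close>)
    finally have "c * norm p - (\<Sum>j=1..N. tt j * Kf j) \<le> (\<Sum>j=1..N. tt j * (c' * norm p - Kf j))"
      by (simp add: right_diff_distrib sum_subtractf)
    also have "\<dots> \<le> Tsum N H tt p" unfolding Tsum_def
      by (rule sum_mono) (use ttp Kf in \<open>auto intro!: mult_left_mono less_imp_le\<close>)
    finally show ?thesis .
  qed
  then show ?thesis by blast
qed

lemma T_strict:
  assumes "p \<noteq> q"
  shows "Tsum N H tt ((1/2) *\<^sub>R (p + q)) < (Tsum N H tt p + Tsum N H tt q) / 2"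
proof -
  have m: "(1/2) *\<^sub>R (p + q) = (1 - 1/2) *\<^sub>R p + (1/2) *\<^sub>R q" by (simp add: scaleR_add_right)
  have le: "H j ((1/2) *\<^sub>R (p + q)) \<le> (H j p + H j q) / 2" if "j \<in> {1..N}" for j
    using convex_onD[OF Hcv[OF that], of "1/2" p q] m by simp
  obtain j0 where j0: "j0 \<in> {1..N}" "strictly_convex (H j0)" using Hst by blast
  have lt0: "H j0 ((1 - 1/2) *\<^sub>R p + (1/2) *\<^sub>R q) < (1 - 1/2) * H j0 p + (1/2) * H j0 q"
  proof -
    have "p \<noteq> q \<and> 0 < (1/2::real) \<and> (1/2::real) < 1 \<longrightarrow>
        H j0 ((1 - 1/2) *\<^sub>R p + (1/2) *\<^sub>R q) < (1 - 1/2) * H j0 p + (1/2) * H j0 q"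
      using j0(2) unfolding strictly_convex_def by blast
    then show ?thesis using assms by simp
  qed
  have lt: "H j0 ((1/2) *\<^sub>R (p + q)) < (H j0 p + H j0 q) / 2"
    using lt0 m by simp
  have "Tsum N H tt ((1/2) *\<^sub>R (p + q)) < (\<Sum>j=1..N. tt j * ((H j p + H j q) / 2))"
    unfolding Tsum_def
    by (rule sum_strict_mono_ex1)
       (use le lt j0 ttp in \<open>auto intro!: mult_left_mono less_imp_le mult_strict_left_mono\<close>)
  also have "\<dots> = (Tsum N H tt p + Tsum N H tt q) / 2"
    unfolding Tsum_def by (simp add: distrib_left add_divide_distrib sum.distrib sum_divide_distrib)
  finally show ?thesis .
qed

lemma inst:
  assumes Jn: "\<And>z. J z \<noteq> -\<infinity>" and jx: "J x = ereal jx" and p0: "legendre J pz \<noteq> \<infinity>"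
  shows "hopf_gen (\<lambda>p. legendre J p + ereal (Tsum N H tt p))"
proof -
  have Ln: "legendre J p \<noteq> -\<infinity>" for p using L_ge[of p x J] jx by auto
  show ?thesis
  proof
    show "legendre J p + ereal (Tsum N H tt p) \<noteq> -\<infinity>" for p using Ln[of p] by (cases "legendre J p") auto
    show "\<exists>p0. legendre J p0 + ereal (Tsum N H tt p0) \<noteq> \<infinity>"
      using p0 by (intro exI[of _ pz]) (cases "legendre J pz"; auto)
  next
    fix p q and c :: "nat \<Rightarrow> real" and d
    assume pq: "p \<longlonglongrightarrow> q" and le: "\<And>n. legendre J (p n) + ereal (Tsum N H tt (p n)) \<le> ereal (c n)"
      and cd: "c \<longlonglongrightarrow> d"
    have "legendre J (p n) \<le> ereal (c n - Tsum N H tt (p n))" for n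
      using le[of n] Ln[of "p n"] by (cases "legendre J (p n)") auto
    then have "legendre J q \<le> ereal (d - Tsum N H tt q)"
      by (rule L_lsc[OF Jn pq]) (intro tendsto_intros cd T_cont pq)
    then show "legendre J q + ereal (Tsum N H tt q) \<le> ereal d"
      using Ln[of q] by (cases "legendre J q") auto
  next
    fix p q and a b
    assume ne: "p \<noteq> q" and a: "legendre J p + ereal (Tsum N H tt p) = ereal a"
      and b: "legendre J q + ereal (Tsum N H tt q) = ereal b"
    have a': "legendre J p = ereal (a - Tsum N H tt p)" using a Ln[of p] by (cases "legendre J p") auto
    have b': "legendre J q = ereal (b - Tsum N H tt q)" using b Ln[of q] by (cases "legendre J q") auto
    have "legendre J ((1/2) *\<^sub>R (p + q)) \<le> ereal ((a - Tsum N H tt p + (b - Tsum N H tt q))/2)"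
      by (rule L_mid[OF Jn a' b'])
    moreover have "Tsum N H tt ((1/2) *\<^sub>R (p + q)) < (Tsum N H tt p + Tsum N H tt q) / 2"
      by (rule T_strict[OF ne])
    ultimately show "legendre J ((1/2) *\<^sub>R (p + q)) + ereal (Tsum N H tt ((1/2) *\<^sub>R (p + q))) < ereal ((a + b)/2)"
      using Ln[of "(1/2) *\<^sub>R (p + q)"] by (cases "legendre J ((1/2) *\<^sub>R (p + q))") (auto simp: field_simps)
  next
    fix c
    obtain K where K: "\<And>p. (c + norm x) * norm p - K \<le> Tsum N H tt p" using T_coerc by blast
    have "ereal (c * norm p - (K + jx)) \<le> legendre J p + ereal (Tsum N H tt p)" for p
    proof -
      have "ereal (p \<bullet> x - jx) \<le> legendre J p" using L_ge[of p x J] jx by simp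
      then have e1: "ereal (p \<bullet> x - jx + Tsum N H tt p) \<le> legendre J p + ereal (Tsum N H tt p)"
        using Ln[of p] by (cases "legendre J p") auto
      have i1: "- (p \<bullet> x) \<le> norm p * norm x"
        by (rule order_trans[OF abs_ge_minus_self Cauchy_Schwarz_ineq2])
      have i2: "(c + norm x) * norm p = c * norm p + norm p * norm x" by (simp add: algebra_simps)
      have "c * norm p - (K + jx) \<le> p \<bullet> x - jx + Tsum N H tt p" using K[of p] i1 i2 by linarith
      then have "ereal (c * norm p - (K + jx)) \<le> ereal (p \<bullet> x - jx + Tsum N H tt p)" by simp
      then show ?thesis using e1 by (rule order_trans)
    qed
    then show "\<exists>K. \<forall>p. ereal (c * norm p - K) \<le> legendre J p + ereal (Tsum N H tt p)" by blast
  qed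
qed

end



lemma hopf_eq:
  assumes "\<And>p. legendre J p \<noteq> -\<infinity>" and G: "hopf_gen (\<lambda>p. legendre J p + ereal (Tsum N H tt p))"
  shows "hopf N H J y tt = hopf_gen.S (\<lambda>p. legendre J p + ereal (Tsum N H tt p)) y"
  unfolding hopf_gen.S_def[OF G] unfolding hopf_def Tsum_def
proof (rule SUP_cong)
  fix p
  show "ereal (p \<bullet> y) - legendre J p - ereal (\<Sum>j = 1..N. tt j * H j p) =
        ereal (p \<bullet> y) - (legendre J p + ereal (\<Sum>j = 1..N. tt j * H j p))"
    using assms(1)[of p] by (cases "legendre J p") auto
qed simp

lemma grad_eq:
  assumes F: "hopf_gen F" and eq: "\<And>y. hopf N H J y tt = hopf_gen.S F y"
  shows "hopf_grad N H J y tt = hopf_gen.P F y"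
proof -
  have e: "(\<lambda>z. real_of_ereal (hopf N H J z tt)) = hopf_gen.s F"
    by (rule ext) (simp add: hopf_gen.s_def[OF F] eq)
  show ?thesis unfolding hopf_grad_def e
    by (rule the_equality) (use gderiv_unique hopf_gen.s_deriv[OF F] in blast)+
qed



theorem lemma3p4:
  fixes N :: nat
    and H :: "nat \<Rightarrow> 'a::euclidean_space \<Rightarrow> real"
    and J :: "'a \<Rightarrow> ereal"
    and x :: 'a
    and t :: "nat \<Rightarrow> nat \<Rightarrow> real"
    and v :: "nat \<Rightarrow> nat \<Rightarrow> 'a"
    and v_inf :: "nat \<Rightarrow> 'a"
    and alpha :: "nat \<Rightarrow> real"
    and xs :: "nat \<Rightarrow> 'a"
  assumes H_convex: "\<And>j. j \<in> {1..N} \<Longrightarrow> convex_on UNIV (H j)"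
    and H_coercive: "\<And>j. j \<in> {1..N} \<Longrightarrow> one_coercive (H j)"
    and H_strict: "\<exists>j\<in>{1..N}. strictly_convex (H j)"
    and J_proper: "proper_fun J"
    and J_convex: "convex_fun J"
    and J_lsc: "lsc_fun J"
    and t_pos: "\<And>j k. j \<in> {1..N} \<Longrightarrow> t j k > 0"
    and t_lim: "\<And>j. j \<in> {1..N} \<Longrightarrow> (\<lambda>k. t j k) \<longlonglongrightarrow> 0"
    and v_lim: "\<And>j. j \<in> {1..N} \<Longrightarrow> (\<lambda>k. v j k) \<longlonglongrightarrow> v_inf j"
    and ratio_lim: "\<And>j. j \<in> {1..N} \<Longrightarrow> (\<lambda>k. t j k / t 1 k) \<longlonglongrightarrow> alpha j"
    and xs_def: "\<And>k. xs k = x + (\<Sum>j=1..N. t j k *\<^sub>R v j k)"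
    and x_dom: "J x < \<infinity>"
    and subdiff_ne: "subdiff J x \<noteq> {}"
  shows "bounded (range (\<lambda>k. hopf_grad N H J (xs k) (\<lambda>j. t j k)))
       \<and> (\<forall>q. cluster_point (\<lambda>k. hopf_grad N H J (xs k) (\<lambda>j. t j k)) q \<longrightarrow> q \<in> subdiff J x)"
proof -
  have N1: "1 \<in> {1..N}" using H_strict by auto
  have Jn: "\<And>z. J z \<noteq> -\<infinity>" using J_proper unfolding proper_fun_def by blast
  obtain jx where jx: "J x = ereal jx" using x_dom Jn[of x] by (cases "J x") auto
  obtain p0 where p0: "p0 \<in> subdiff J x" using subdiff_ne by blast
  have p0s: "J x + ereal (p0 \<bullet> (y - x)) \<le> J y" for y using p0 unfolding subdiff_def by blast
  have Lp0: "legendre J p0 = ereal (p0 \<bullet> x - jx)"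
  proof (rule antisym)
    show "legendre J p0 \<le> ereal (p0 \<bullet> x - jx)" unfolding legendre_def
    proof (rule SUP_least)
      fix y show "ereal (p0 \<bullet> y) - J y \<le> ereal (p0 \<bullet> x - jx)"
      proof (cases "J y")
        case (real jy) then show ?thesis using p0s[of y] jx by (simp add: inner_diff_right)
      next
        case MInf then show ?thesis using Jn[of y] by simp
      qed simp
    qed
    show "ereal (p0 \<bullet> x - jx) \<le> legendre J p0" using L_ge[of p0 x J] jx by simp
  qed
  have Ln: "legendre J p \<noteq> -\<infinity>" for p using L_ge[of p x J] jx by auto
  define T where "T k = Tsum N H (\<lambda>j. t j k)" for k
  define F where "F k = (\<lambda>p. legendre J p + ereal (T k p))" for k
  have G0: "hopf_gen (\<lambda>p. legendre J p + ereal (Tsum N H (\<lambda>j. t j k) p))" for k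
    by (rule inst[where J=J and x=x and jx=jx and pz=p0])
       (use H_convex H_coercive H_strict t_pos Lp0 Jn jx in auto)
  have G: "hopf_gen (F k)" for k unfolding F_def T_def by (rule G0)
  define pk where "pk k = hopf_gen.P (F k) (xs k)" for k
  define sk where "sk k = hopf_gen.s (F k) (xs k)" for k
  have grad: "hopf_grad N H J (xs k) (\<lambda>j. t j k) = pk k" for k
  proof -
    have "hopf N H J y (\<lambda>j. t j k) = hopf_gen.S (F k) y" for y
      unfolding F_def T_def by (rule hopf_eq[OF Ln G0])
    then show ?thesis unfolding pk_def by (rule grad_eq[OF G])
  qed
  have Lr: "legendre J (pk k) = ereal (pk k \<bullet> xs k - sk k - T k (pk k))" for k
  proof -
    have "F k (pk k) = ereal (pk k \<bullet> xs k - sk k)" unfolding pk_def sk_def by (rule hopf_gen.P_eq[OF G])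
    then have "legendre J (pk k) + ereal (T k (pk k)) = ereal (pk k \<bullet> xs k - sk k)" by (simp add: F_def)
    then show ?thesis using Ln[of "pk k"] by (cases "legendre J (pk k)") auto
  qed
  have A: "pk k \<bullet> x - jx \<le> pk k \<bullet> xs k - sk k - T k (pk k)" for k
    using L_ge[of "pk k" x J] jx Lr[of k] by simp
  have B: "p0 \<bullet> xs k - sk k \<le> p0 \<bullet> x - jx + T k p0" for k
  proof -
    have "ereal (p0 \<bullet> xs k - sk k) \<le> F k p0" unfolding sk_def by (rule hopf_gen.f_ge[OF G])
    then show ?thesis using Lp0 by (simp add: F_def)
  qed
  have xsd: "p \<bullet> (xs k - x) = (\<Sum>j=1..N. t j k * (p \<bullet> v j k))" for p k
    by (simp add: xs_def inner_sum_right)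
  define W where "W k j = pk k \<bullet> v j k - H j (pk k) - p0 \<bullet> v j k + H j p0" for k j
  have key: "pk k \<bullet> xs k - sk k - T k (pk k) - (pk k \<bullet> x - jx) \<le> (\<Sum>j=1..N. t j k * W k j)" for k
  proof -
    have eq: "(\<Sum>j=1..N. t j k * W k j) = pk k \<bullet> (xs k - x) - T k (pk k) - p0 \<bullet> (xs k - x) + T k p0"
      unfolding W_def xsd T_def Tsum_def by (simp add: algebra_simps sum.distrib sum_subtractf)
    show ?thesis using B[of k] eq unfolding inner_diff_right by linarith
  qed
  have "\<forall>j\<in>{1..N}. \<exists>V. \<forall>k. norm (v j k) \<le> V"
  proof
    fix j assume j: "j \<in> {1..N}"
    have "Bseq (\<lambda>k. v j k)" using v_lim[OF j] by (intro convergent_imp_Bseq) (auto simp: convergent_def)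
    then show "\<exists>V. \<forall>k. norm (v j k) \<le> V" unfolding Bseq_def by blast
  qed
  then obtain V where V: "\<And>j k. j \<in> {1..N} \<Longrightarrow> norm (v j k) \<le> V j" by metis
  have "\<forall>j\<in>{1..N}. \<exists>K. \<forall>p. V j * norm p - K \<le> H j p"
    using H_lower[OF H_convex H_coercive] by blast
  then obtain Kf where Kf: "\<And>j p. j \<in> {1..N} \<Longrightarrow> V j * norm p - Kf j \<le> H j p" by metis
  obtain K1 where K1: "\<And>p. (V 1 + 1) * norm p - K1 \<le> H 1 p"
    using H_lower[OF H_convex[OF N1] H_coercive[OF N1]] by blast
  define A where "A j = Kf j + norm p0 * V j + \<bar>H j p0\<bar>" for j
  have ip: "p \<bullet> v j k \<le> norm p * V j" "- (p \<bullet> v j k) \<le> norm p * V j" if j: "j \<in> {1..N}" for p j k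
  proof -
    have "norm p * norm (v j k) \<le> norm p * V j" by (rule mult_left_mono[OF V[OF j] norm_ge_zero])
    then show "p \<bullet> v j k \<le> norm p * V j" "- (p \<bullet> v j k) \<le> norm p * V j"
      using Cauchy_Schwarz_ineq2[of p "v j k"] by linarith+
  qed
  have WA: "W k j \<le> A j" if j: "j \<in> {1..N}" for k j
    using Kf[OF j, of "pk k"] ip(1)[OF j, of "pk k" k] ip(2)[OF j, of p0 k] abs_ge_self[of "H j p0"]
    unfolding W_def A_def by (simp add: mult.commute)
  have W1: "W k 1 \<le> - norm (pk k) + K1 + norm p0 * V 1 + \<bar>H 1 p0\<bar>" for k
  proof -
    have "(V 1 + 1) * norm (pk k) = norm (pk k) * V 1 + norm (pk k)" by (simp add: algebra_simps)
    then show ?thesis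
      using K1[of "pk k"] ip(1)[OF N1, of "pk k" k] ip(2)[OF N1, of p0 k] abs_ge_self[of "H 1 p0"]
      unfolding W_def by linarith
  qed
  have "\<forall>j\<in>{1..N}. \<exists>B\<ge>0. \<forall>k. t j k \<le> B * t 1 k"
  proof
    fix j assume j: "j \<in> {1..N}"
    have "Bseq (\<lambda>k. t j k / t 1 k)" using ratio_lim[OF j] by (intro convergent_imp_Bseq) (auto simp: convergent_def)
    then obtain B where B: "B > 0" "\<And>k. norm (t j k / t 1 k) \<le> B" unfolding Bseq_def by blast
    have "t j k \<le> B * t 1 k" for k
    proof -
      have "t j k / t 1 k \<le> B" using B(2)[of k] abs_ge_self[of "t j k / t 1 k"] unfolding real_norm_def by linarith
      then show ?thesis using t_pos[OF N1, of k] by (simp add: divide_le_eq)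
    qed
    then show "\<exists>B\<ge>0. \<forall>k. t j k \<le> B * t 1 k" using B(1) by (intro exI[of _ B]) auto
  qed
  then obtain Bf where Bf: "\<And>j. j \<in> {1..N} \<Longrightarrow> Bf j \<ge> 0" "\<And>j k. j \<in> {1..N} \<Longrightarrow> t j k \<le> Bf j * t 1 k"
    by metis
  define C where "C = K1 + norm p0 * V 1 + \<bar>H 1 p0\<bar> + (\<Sum>j=Suc 1..N. Bf j * max (A j) 0)"
  have bnd: "norm (pk k) \<le> C" for k
  proof -
    have t1: "t 1 k > 0" using t_pos[OF N1] .
    have "0 \<le> (\<Sum>j=1..N. t j k * W k j)" using key[of k] A[of k] by linarith
    also have "\<dots> = t 1 k * W k 1 + (\<Sum>j=Suc 1..N. t j k * W k j)"
      using N1 by (simp add: sum.atLeast_Suc_atMost)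
    also have "(\<Sum>j=Suc 1..N. t j k * W k j) \<le> (\<Sum>j=Suc 1..N. t 1 k * (Bf j * max (A j) 0))"
    proof (rule sum_mono)
      fix j assume "j \<in> {Suc 1..N}"
      then have j: "j \<in> {1..N}" by auto
      have "t j k * W k j \<le> t j k * max (A j) 0"
        using WA[OF j, of k] t_pos[OF j, of k] by (intro mult_left_mono) auto
      also have "\<dots> \<le> (Bf j * t 1 k) * max (A j) 0"
        using Bf(2)[OF j, of k] by (intro mult_right_mono) auto
      finally show "t j k * W k j \<le> t 1 k * (Bf j * max (A j) 0)" by (simp add: algebra_simps)
    qed
    finally have "0 \<le> t 1 k * (W k 1 + (\<Sum>j=Suc 1..N. Bf j * max (A j) 0))"
      by (simp add: distrib_left sum_distrib_left)
    then have "0 \<le> W k 1 + (\<Sum>j=Suc 1..N. Bf j * max (A j) 0)"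
      using t1 by (simp add: zero_le_mult_iff)
    then show ?thesis using W1[of k] unfolding C_def by linarith
  qed
  define e where "e k = (\<Sum>j=1..N. t j k * A j)" for k
  have e0: "e \<longlonglongrightarrow> 0"
  proof -
    have "(\<lambda>k. t j k * A j) \<longlonglongrightarrow> 0 * A j" if "j \<in> {1..N}" for j
      using t_lim[OF that] by (rule tendsto_mult_right)
    then have "e \<longlonglongrightarrow> (\<Sum>j=1..N. 0 * A j)" unfolding e_def by (intro tendsto_sum) auto
    then show ?thesis by simp
  qed
  have Le: "legendre J (pk k) \<le> ereal (pk k \<bullet> x - jx + e k)" for k
  proof -
    have "(\<Sum>j=1..N. t j k * W k j) \<le> e k" unfolding e_def
      by (rule sum_mono) (use WA t_pos in \<open>auto intro!: mult_left_mono less_imp_le\<close>)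
    then show ?thesis using key[of k] Lr[of k] by simp
  qed
  show ?thesis
    unfolding grad
  proof
    show "bounded (range (\<lambda>k. pk k))" unfolding bounded_iff using bnd by blast
    show "\<forall>q. cluster_point (\<lambda>k. pk k) q \<longrightarrow> q \<in> subdiff J x"
    proof (intro allI impI)
      fix q assume "cluster_point (\<lambda>k. pk k) q"
      then obtain r where r: "strict_mono r" "(pk \<circ> r) \<longlonglongrightarrow> q"
        unfolding cluster_point_def by (auto simp: o_def)
      have er: "(\<lambda>n. e (r n)) \<longlonglongrightarrow> 0" using LIMSEQ_subseq_LIMSEQ[OF e0 r(1)] by (simp add: o_def)
      have Lq: "legendre J q \<le> ereal (q \<bullet> x - jx + 0)"
      proof (rule L_lsc[OF Jn r(2), where c = "\<lambda>n. (pk \<circ> r) n \<bullet> x - jx + e (r n)"])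
        show "legendre J ((pk \<circ> r) n) \<le> ereal ((pk \<circ> r) n \<bullet> x - jx + e (r n))" for n
          using Le[of "r n"] by simp
        show "(\<lambda>n. (pk \<circ> r) n \<bullet> x - jx + e (r n)) \<longlonglongrightarrow> q \<bullet> x - jx + 0"
          by (intro tendsto_intros r(2) er)
      qed
      show "q \<in> subdiff J x" unfolding subdiff_def
      proof (intro CollectI allI)
        fix y
        show "J x + ereal (q \<bullet> (y - x)) \<le> J y"
        proof (cases "J y")
          case (real jy)
          have "ereal (q \<bullet> y) - J y \<le> ereal (q \<bullet> x - jx + 0)" using L_ge[of q y J] Lq by (rule order_trans)
          then show ?thesis using real jx by (simp add: inner_diff_right)
        next
          case MInf then show ?thesis using Jn[of y] by simp
        qed simp
      qed
    qed
  qed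
qed

end
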